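(* Let $n>m>0$ be integers and let $\nu\in\mathbb{N}^3$ with $|\nu|=n$. Then $$\sum_{\substack{\mu\in\mathbb{N}^3,\ |\mu|=m\\ \mu\le\nu}} P_\mu(q)\,P_{\nu-\mu}(q)=\binom{n}{m}P_\nu(q)\qquad\text{for all }q\in\mathbb{H},$$ where $\mu\le\nu$ means componentwise inequality.
   Context: Quaternions are written $q=t+e_1x_1+e_2x_2+e_3x_3$ with $e_1=i,e_2=j,e_3=k$. For $\nu=(n_1,n_2,n_3)\in\mathbb{N}^3$ put $|\nu|=n_1+n_2+n_3$. Define $z_j(q)=t e_j-x_j$ for $j=1,2,3$. For $|\nu|=n\ge1$ let $I_\nu$ be the set of $n$-tuples $(i_1,\dots,i_n)\in\{1,2,3\}^n$ in which the value $j$ occurs exactly $n_j$ times, and set $P_\nu(q)=\frac{1}{n!}\sum_{(i_1,\dots,i_n)\in I_\nu} z_{i_1}(q)z_{i_2}(q)\cdots z_{i_n}(q)$ (quaternion products in the indicated order); $P_{(0,0,0)}=1$. *)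

theory Defs
  imports Complex_Main
begin

text \<open>q = t + e1 x1 + e2 x2 + e3 x3 with e1 = i, e2 = j, e3 = k (Hamilton's rules).\<close>

codatatype quat = Quat (Re: real) (Im1: real) (Im2: real) (Im3: real)

lemma quat_eqI [intro?]:
  "\<lbrakk>Re x = Re y; Im1 x = Im1 y; Im2 x = Im2 y; Im3 x = Im3 y\<rbrakk> \<Longrightarrow> x = y"
  by (rule quat.expand) simp

instantiation quat :: ring_1
begin

primcorec zero_quat where
  "Re 0 = 0" | "Im1 0 = 0" | "Im2 0 = 0" | "Im3 0 = 0"

primcorec one_quat where
  "Re 1 = 1" | "Im1 1 = 0" | "Im2 1 = 0" | "Im3 1 = 0"

primcorec plus_quat where
  "Re (x + y) = Re x + Re y" | "Im1 (x + y) = Im1 x + Im1 y"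
| "Im2 (x + y) = Im2 x + Im2 y" | "Im3 (x + y) = Im3 x + Im3 y"

primcorec uminus_quat where
  "Re (- x) = - Re x" | "Im1 (- x) = - Im1 x"
| "Im2 (- x) = - Im2 x" | "Im3 (- x) = - Im3 x"

primcorec minus_quat where
  "Re (x - y) = Re x - Re y" | "Im1 (x - y) = Im1 x - Im1 y"
| "Im2 (x - y) = Im2 x - Im2 y" | "Im3 (x - y) = Im3 x - Im3 y"

primcorec times_quat where
  "Re (x * y) = Re x * Re y - Im1 x * Im1 y - Im2 x * Im2 y - Im3 x * Im3 y"
| "Im1 (x * y) = Re x * Im1 y + Im1 x * Re y + Im2 x * Im3 y - Im3 x * Im2 y"
| "Im2 (x * y) = Re x * Im2 y - Im1 x * Im3 y + Im2 x * Re y + Im3 x * Im1 y"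
| "Im3 (x * y) = Re x * Im3 y + Im1 x * Im2 y - Im2 x * Im1 y + Im3 x * Re y"

instance
  by standard (auto intro: quat_eqI simp: algebra_simps dest: arg_cong[of _ _ Re])

end

definition qunit :: "nat \<Rightarrow> quat" where
  "qunit j = (if j = 1 then Quat 0 1 0 0 else if j = 2 then Quat 0 0 1 0 else Quat 0 0 0 1)"

definition qcoord :: "quat \<Rightarrow> nat \<Rightarrow> real" where
  "qcoord q j = (if j = 1 then Im1 q else if j = 2 then Im2 q else Im3 q)"

definition qreal :: "real \<Rightarrow> quat" where
  "qreal r = Quat r 0 0 0"

definition zfun :: "nat \<Rightarrow> quat \<Rightarrow> quat" where
  "zfun j q = qreal (Re q) * qunit j - qreal (qcoord q j)"

text \<open>Multi-indices nu = (n1,n2,n3) are represented as functions nat => nat;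
  only the values at 1, 2, 3 matter. |nu| = n1 + n2 + n3.\<close>
definition mabs :: "(nat \<Rightarrow> nat) \<Rightarrow> nat" where
  "mabs \<nu> = \<nu> 1 + \<nu> 2 + \<nu> 3"

definition Iset :: "(nat \<Rightarrow> nat) \<Rightarrow> nat list set" where
  "Iset \<nu> = {is. length is = mabs \<nu> \<and> set is \<subseteq> {1,2,3} \<and>
                  (\<forall>j\<in>{1,2,3}. count_list is j = \<nu> j)}"

definition Pfun :: "(nat \<Rightarrow> nat) \<Rightarrow> quat \<Rightarrow> quat" where
  "Pfun \<nu> q = (if mabs \<nu> = 0 then 1 else
     qreal (1 / fact (mabs \<nu>)) * (\<Sum>is\<in>Iset \<nu>. prod_list (map (\<lambda>i. zfun i q) is)))"

end

theory Submission
  imports Defs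
begin

definition FF :: "nat \<Rightarrow> nat \<Rightarrow> nat \<Rightarrow> nat \<Rightarrow> nat" where
  "FF a b c = (\<lambda>j. if j = 1 then a else if j = 2 then b else c)"

definition Ssum :: "(nat \<Rightarrow> nat) \<Rightarrow> quat \<Rightarrow> quat" where
  "Ssum \<nu> q = (\<Sum>is\<in>Iset \<nu>. prod_list (map (\<lambda>i. zfun i q) is))"

lemma qreal_mult: "qreal a * qreal b = qreal (a * b)"
  by (rule quat_eqI) (simp_all add: qreal_def)

lemma qreal_add: "qreal a + qreal b = qreal (a + b)"
  by (rule quat_eqI) (simp_all add: qreal_def)

lemma qreal_one: "qreal 1 = 1"
  by (rule quat_eqI) (simp_all add: qreal_def)

lemma qreal_comm: "qreal a * x = x * qreal a"
  by (rule quat_eqI) (simp_all add: qreal_def)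

lemma of_nat_quat: "(of_nat k :: quat) = qreal (real k)"
proof (induction k)
  case 0
  then show ?case by (rule quat_eqI) (simp_all add: qreal_def)
next
  case (Suc k)
  then show ?case by (simp add: qreal_add[symmetric] qreal_one)
qed

lemma count3: "set xs \<subseteq> {1,2,3::nat} \<Longrightarrow>
  count_list xs 1 + count_list xs 2 + count_list xs 3 = length xs"
  by (induction xs) auto

lemma Iset_FF: "Iset (FF a b c) = {is. length is = a+b+c \<and> set is \<subseteq> {1,2,3} \<and>
   count_list is 1 = a \<and> count_list is 2 = b \<and> count_list is 3 = c}"
  unfolding Iset_def mabs_def FF_def by auto

lemma finite_Iset: "finite (Iset \<nu>)"
proof -
  have "Iset \<nu> \<subseteq> {xs. set xs \<subseteq> {1,2,3} \<and> length xs = mabs \<nu>}"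
    unfolding Iset_def by auto
  moreover have "finite {xs. set xs \<subseteq> {1,2,3::nat} \<and> length xs = mabs \<nu>}"
    by (rule finite_lists_length_eq) simp
  ultimately show ?thesis by (rule finite_subset)
qed

lemma core:
  fixes q :: quat
  assumes "m \<le> n1 + n2 + n3"
  defines "T \<equiv> {(m1, m2, m3). m1 + m2 + m3 = m \<and> m1 \<le> n1 \<and> m2 \<le> n2 \<and> m3 \<le> n3}"
  shows "(\<Sum>\<mu>\<in>T. Ssum (FF (fst \<mu>) (fst (snd \<mu>)) (snd (snd \<mu>))) q *
      Ssum (FF (n1 - fst \<mu>) (n2 - fst (snd \<mu>)) (n3 - snd (snd \<mu>))) q) = Ssum (FF n1 n2 n3) q"
proof -
  define f where "f \<mu> = FF (fst \<mu>) (fst (snd \<mu>)) (snd (snd \<mu>))" for \<mu> :: "nat\<times>nat\<times>nat"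
  define g where "g \<mu> = FF (n1 - fst \<mu>) (n2 - fst (snd \<mu>)) (n3 - snd (snd \<mu>))" for \<mu> :: "nat\<times>nat\<times>nat"
  define z where "z xs = prod_list (map (\<lambda>i. zfun i q) xs)" for xs
  define B where "B \<mu> = Iset (f \<mu>) \<times> Iset (g \<mu>)" for \<mu>
  define h where "h p = fst (snd p) @ snd (snd p)" for p :: "(nat\<times>nat\<times>nat) \<times> nat list \<times> nat list"
  have finT: "finite T"
    by (rule finite_subset[of _ "{..n1} \<times> {..n2} \<times> {..n3}"]) (auto simp: T_def)
  have finB: "finite (B \<mu>)" for \<mu> by (simp add: B_def finite_Iset)
  have step1: "Ssum (f \<mu>) q * Ssum (g \<mu>) q = (\<Sum>ab\<in>B \<mu>. z (fst ab @ snd ab))" for \<mu>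
    unfolding Ssum_def B_def z_def
    by (simp add: sum_product sum.cartesian_product case_prod_beta)
  have "(\<Sum>\<mu>\<in>T. Ssum (f \<mu>) q * Ssum (g \<mu>) q) = (\<Sum>\<mu>\<in>T. \<Sum>ab\<in>B \<mu>. z (fst ab @ snd ab))"
    using step1 by simp
  also have "\<dots> = (\<Sum>p\<in>Sigma T B. z (h p))"
    unfolding h_def using finT finB by (subst sum.Sigma) (auto simp: case_prod_beta)
  also have "\<dots> = (\<Sum>w\<in>h ` Sigma T B. z w)"
  proof (rule sum.reindex[symmetric, unfolded comp_def])
    show "inj_on h (Sigma T B)"
    proof (rule inj_onI)
      fix p p' assume p: "p \<in> Sigma T B" and p': "p' \<in> Sigma T B" and e: "h p = h p'"
      obtain a b c x y where pe: "p = ((a,b,c),(x,y))" by (metis prod.collapse)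
      obtain a' b' c' x' y' where pe': "p' = ((a',b',c'),(x',y'))" by (metis prod.collapse)
      have xi0: "x \<in> Iset (FF a b c)" "x' \<in> Iset (FF a' b' c')"
        and t0: "(a,b,c) \<in> T" "(a',b',c') \<in> T"
        using p p' by (simp_all add: pe pe' B_def f_def)
      have lx: "length x = m" "length x' = m"
        using xi0 t0 unfolding Iset_FF T_def by auto
      have xy: "x = x'" "y = y'" using e lx unfolding pe pe' h_def by auto
      have xi: "x \<in> Iset (FF a b c)" "x' \<in> Iset (FF a' b' c')"
        using p p' by (simp_all add: pe pe' B_def f_def)
      have "a = a'" "b = b'" "c = c'"
        using xi xy(1) unfolding Iset_FF by auto
      then show "p = p'" using xy pe pe' by simp
    qed
  qed
  also have "h ` Sigma T B = Iset (FF n1 n2 n3)"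
  proof
    show "h ` Sigma T B \<subseteq> Iset (FF n1 n2 n3)"
    proof
      fix w assume "w \<in> h ` Sigma T B"
      then obtain a b c x y where mem: "((a,b,c),(x,y)) \<in> Sigma T B" and w: "w = x @ y"
        unfolding h_def by force
      then show "w \<in> Iset (FF n1 n2 n3)"
        unfolding T_def B_def f_def g_def Iset_FF by auto
    qed
  next
    show "Iset (FF n1 n2 n3) \<subseteq> h ` Sigma T B"
    proof
      fix w assume w: "w \<in> Iset (FF n1 n2 n3)"
      define x where "x = take m w"
      define y where "y = drop m w"
      define \<mu> where "\<mu> = (count_list x 1, count_list x 2, count_list x 3)"
      have lw: "length w = n1+n2+n3" and sw: "set w \<subseteq> {1,2,3}"
        and cw: "count_list w 1 = n1" "count_list w 2 = n2" "count_list w 3 = n3"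
        using w unfolding Iset_FF by auto
      have wxy: "w = x @ y" unfolding x_def y_def by simp
      have sx: "set x \<subseteq> {1,2,3}" and sy: "set y \<subseteq> {1,2,3}"
        using sw wxy by auto
      have lx: "length x = m" using lw assms(1) unfolding x_def by simp
      have ly: "length y = n1+n2+n3 - m" using lw unfolding y_def by simp
      have cxy: "count_list w j = count_list x j + count_list y j" for j
        using wxy by simp
      have "\<mu> \<in> T" unfolding T_def \<mu>_def using count3[OF sx] lx cxy[of 1] cxy[of 2] cxy[of 3] cw
        by simp
      moreover have "x \<in> Iset (f \<mu>)" unfolding f_def \<mu>_def Iset_FF
        using count3[OF sx] sx lx by simp
      moreover have "y \<in> Iset (g \<mu>)" unfolding g_def \<mu>_def Iset_FF
        using count3[OF sy] count3[OF sx] lx sy ly cxy[of 1] cxy[of 2] cxy[of 3] cw by (simp; linarith)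
      ultimately have "(\<mu>,(x,y)) \<in> Sigma T B" unfolding B_def by simp
      then show "w \<in> h ` Sigma T B" using wxy unfolding h_def by force
    qed
  qed
  finally show ?thesis unfolding f_def g_def Ssum_def z_def .
qed


lemma Pfun_FF: "0 < a + b + c \<Longrightarrow> Pfun (FF a b c) q = qreal (1 / fact (a+b+c)) * Ssum (FF a b c) q"
  unfolding Pfun_def Ssum_def by (auto simp add: mabs_def FF_def)

lemma qreal_rearr: "qreal x * A * (qreal y * B) = qreal (x*y) * (A*B)"
proof -
  have "qreal x * A * (qreal y * B) = qreal x * (A * qreal y) * B" by (simp add: mult.assoc)
  also have "\<dots> = qreal x * (qreal y * A) * B" by (simp add: qreal_comm)
  also have "\<dots> = qreal (x*y) * (A*B)" by (simp add: mult.assoc[symmetric] qreal_mult)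
  finally show ?thesis .
qed

theorem mainTheorem1:
  fixes n m n1 n2 n3 :: nat and q :: quat
  assumes "0 < m" and "m < n" and "n1 + n2 + n3 = n"
  shows "(\<Sum>(m1, m2, m3) \<in> {(m1, m2, m3). m1 + m2 + m3 = m \<and> m1 \<le> n1 \<and> m2 \<le> n2 \<and> m3 \<le> n3}.
            Pfun (\<lambda>j. if j = 1 then m1 else if j = 2 then m2 else m3) q *
            Pfun (\<lambda>j. if j = 1 then n1 - m1 else if j = 2 then n2 - m2 else n3 - m3) q)
         = of_nat (n choose m) * Pfun (\<lambda>j. if j = 1 then n1 else if j = 2 then n2 else n3) q"
proof -
  define T where "T = {(m1, m2, m3). m1 + m2 + m3 = m \<and> m1 \<le> n1 \<and> m2 \<le> n2 \<and> m3 \<le> n3}"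
  define c where "c = 1 / (fact m * fact (n - m) :: real)"
  have eq: "Pfun (FF (fst \<mu>) (fst (snd \<mu>)) (snd (snd \<mu>))) q *
      Pfun (FF (n1 - fst \<mu>) (n2 - fst (snd \<mu>)) (n3 - snd (snd \<mu>))) q
      = qreal c * (Ssum (FF (fst \<mu>) (fst (snd \<mu>)) (snd (snd \<mu>))) q *
      Ssum (FF (n1 - fst \<mu>) (n2 - fst (snd \<mu>)) (n3 - snd (snd \<mu>))) q)" if "\<mu> \<in> T" for \<mu>
  proof -
    obtain a b d where mu: "\<mu> = (a,b,d)" by (metis prod.collapse)
    have h: "a + b + d = m" "a \<le> n1" "b \<le> n2" "d \<le> n3" using that by (auto simp: T_def mu)
    have h2: "(n1 - a) + (n2 - b) + (n3 - d) = n - m" using h assms by simp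
    show ?thesis unfolding mu using h h2 assms
      by (simp add: Pfun_FF qreal_rearr c_def)
  qed
  have "(\<Sum>(m1, m2, m3) \<in> T.
            Pfun (\<lambda>j. if j = 1 then m1 else if j = 2 then m2 else m3) q *
            Pfun (\<lambda>j. if j = 1 then n1 - m1 else if j = 2 then n2 - m2 else n3 - m3) q)
     = (\<Sum>\<mu>\<in>T. Pfun (FF (fst \<mu>) (fst (snd \<mu>)) (snd (snd \<mu>))) q *
      Pfun (FF (n1 - fst \<mu>) (n2 - fst (snd \<mu>)) (n3 - snd (snd \<mu>))) q)"
    by (simp add: FF_def case_prod_beta)
  also have "\<dots> = qreal c * (\<Sum>\<mu>\<in>T. Ssum (FF (fst \<mu>) (fst (snd \<mu>)) (snd (snd \<mu>))) q *
      Ssum (FF (n1 - fst \<mu>) (n2 - fst (snd \<mu>)) (n3 - snd (snd \<mu>))) q)"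
    by (simp add: eq sum_distrib_left)
  also have "\<dots> = qreal c * Ssum (FF n1 n2 n3) q"
    using core[of m n1 n2 n3 q] assms unfolding T_def by simp
  also have "\<dots> = of_nat (n choose m) * Pfun (FF n1 n2 n3) q"
  proof -
    have "real (n choose m) * (1 / fact n) = c"
      using assms binomial_fact[of m n, where 'a=real] by (simp add: c_def)
    then show ?thesis using assms
      by (simp add: Pfun_FF of_nat_quat mult.assoc[symmetric] qreal_mult)
  qed
  finally show ?thesis unfolding T_def FF_def .
qed

end
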